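(* Let $G=(V,E)$ be a finite simple undirected graph, $G_0:=G$, and let $W_1,\dots,W_r$ be distinct subsets of $V$ such that for every $t\in\{1,\dots,r\}$, $W_t$ is a clique of $G_{t-1}$ with $|W_t|\ge2$ and $G_t:=G_{t-1}\mid W_t$. Let $F_0:=STAB(G)$ and $F_t:=\{x\in STAB(G)\mid x_{W_j}=1,\ j=1,\dots,t\}$ for $t\in\{1,\dots,r\}$. Then $F_t\subseteq STAB(G_t)$ for all $t\in\{0,\dots,r\}$.
   Context: For a graph $G=(V,E)$, $\mathcal S(G)\subseteq\{0,1\}^V$ is the set of characteristic vectors of stable sets of $G$, and $STAB(G)=\mathrm{conv}\,\mathcal S(G)$. For $W\subseteq V$ and $x\in\mathbb R^V$, $x_W=\sum_{v\in W}x_v$. The clique projection of a clique $W$ ($|W|\ge2$) of a graph $H=(V,E_H)$ is $H\mid W=(V,E_H\cup\{uv\notin E_H\mid u\ne v,\ W\subseteq N_H(u)\cup N_H(v)\})$, where $N_H(u)$ is the neighborhood of $u$ in $H$. *)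

theory Defs
  imports "HOL-Analysis.Analysis"
begin

text \<open>Finite simple graphs on the vertex set V = UNIV of a finite type 'n;
  edges are 2-element subsets of V.  Vectors in R^V are of type real ^ 'n.\<close>

definition simple_graph :: "'n set set \<Rightarrow> bool" where
  "simple_graph E \<longleftrightarrow> (\<forall>e\<in>E. card e = 2)"

definition nbhd :: "'n set set \<Rightarrow> 'n \<Rightarrow> 'n set" where
  "nbhd E u = {w. {u, w} \<in> E}"

definition is_clique :: "'n set set \<Rightarrow> 'n set \<Rightarrow> bool" where
  "is_clique E W \<longleftrightarrow> (\<forall>u\<in>W. \<forall>v\<in>W. u \<noteq> v \<longrightarrow> {u, v} \<in> E)"

definition is_stable :: "'n set set \<Rightarrow> 'n set \<Rightarrow> bool" where
  "is_stable E S \<longleftrightarrow> (\<forall>u\<in>S. \<forall>v\<in>S. u \<noteq> v \<longrightarrow> {u, v} \<notin> E)"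

definition char_vec :: "'n::finite set \<Rightarrow> real ^ 'n" where
  "char_vec S = (\<chi> v. if v \<in> S then 1 else 0)"

definition STAB :: "'n::finite set set \<Rightarrow> (real ^ 'n) set" where
  "STAB E = convex hull (char_vec ` {S. is_stable E S})"

definition wsum :: "real ^ 'n \<Rightarrow> 'n::finite set \<Rightarrow> real" where
  "wsum x W = (\<Sum>v\<in>W. x $ v)"

definition clique_proj :: "'n set set \<Rightarrow> 'n set \<Rightarrow> 'n set set" where
  "clique_proj E W = E \<union> {{u, v} | u v. {u, v} \<notin> E \<and> u \<noteq> v \<and> W \<subseteq> nbhd E u \<union> nbhd E v}"

fun proj_seq :: "'n set set \<Rightarrow> (nat \<Rightarrow> 'n set) \<Rightarrow> nat \<Rightarrow> 'n set set" where
  "proj_seq E W 0 = E"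
| "proj_seq E W (Suc t) = clique_proj (proj_seq E W t) (W (Suc t))"

end

theory Submission
  imports Defs
begin

lemma wsum_char_vec: "wsum (char_vec S) W = real (card (W \<inter> S))" if "finite W"
proof -
  have "wsum (char_vec S) W = (\<Sum>v\<in>W. if v \<in> S then 1 else 0)"
    by (simp add: wsum_def char_vec_def)
  also have "\<dots> = real (card (W \<inter> S))"
    using that by (simp add: sum.If_cases)
  finally show ?thesis .
qed

lemma stable_clique_le1:
  assumes "is_stable H S" "is_clique H W" "finite W"
  shows "card (W \<inter> S) \<le> 1"
proof -
  have "\<forall>a\<in>W \<inter> S. \<forall>b\<in>W \<inter> S. a = b"
    using assms unfolding is_stable_def is_clique_def by blast
  then show ?thesis using assms(3) by (simp add: card_le_Suc0_iff_eq)
qed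

lemma stable_proj:
  assumes "is_stable H S" "W \<inter> S = {w}" "\<forall>u. {u} \<notin> H"
  shows "is_stable (clique_proj H W) S"
  unfolding is_stable_def
proof (intro ballI impI)
  fix u v assume uv: "u \<in> S" "v \<in> S" "u \<noteq> v"
  show "{u, v} \<notin> clique_proj H W"
  proof
    assume "{u, v} \<in> clique_proj H W"
    then consider "{u,v} \<in> H" | a b where "{u,v} = {a,b}" "W \<subseteq> nbhd H a \<union> nbhd H b"
      unfolding clique_proj_def by blast
    then show False
    proof cases
      case 1 then show ?thesis using assms(1) uv unfolding is_stable_def by blast
    next
      case 2
      then have W: "W \<subseteq> nbhd H u \<union> nbhd H v"
        by (auto simp: doubleton_eq_iff)
      have wS: "w \<in> S" "w \<in> W" using assms(2) by auto
      then have "{u, w} \<in> H \<or> {v, w} \<in> H" using W unfolding nbhd_def by blast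
      moreover have "{u,w} \<notin> H"
        using assms(1,3) uv wS unfolding is_stable_def by (metis insert_absorb2)
      moreover have "{v,w} \<notin> H"
        using assms(1,3) uv wS unfolding is_stable_def by (metis insert_absorb2)
      ultimately show False by blast
    qed
  qed
qed

lemma key:
  fixes H :: "'n::finite set set"
  assumes x: "x \<in> STAB H" and cl: "is_clique H W" and ws: "wsum x W = 1"
    and ns: "\<forall>u. {u} \<notin> H"
  shows "x \<in> STAB (clique_proj H W)"
proof -
  define P where "P = char_vec ` {S. is_stable H S}"
  have fP: "finite P" unfolding P_def by (rule finite_imageI[OF finite])
  have "x \<in> convex hull P" using x unfolding STAB_def P_def .
  then obtain u where u0: "\<forall>p\<in>P. 0 \<le> u p" and u1: "sum u P = 1"
    and ux: "(\<Sum>p\<in>P. u p *\<^sub>R p) = x"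
    unfolding convex_hull_finite[OF fP] mem_Collect_eq by blast
  have wle: "wsum p W \<le> 1" if "p \<in> P" for p
    using that stable_clique_le1[OF _ cl] unfolding P_def
    by (auto simp: wsum_char_vec)
  have "wsum x W = (\<Sum>p\<in>P. u p * wsum p W)"
  proof -
    have "wsum x W = (\<Sum>v\<in>W. \<Sum>p\<in>P. u p * p $ v)"
      unfolding ux[symmetric] wsum_def by simp
    also have "\<dots> = (\<Sum>p\<in>P. \<Sum>v\<in>W. u p * p $ v)" by (rule sum.swap)
    also have "\<dots> = (\<Sum>p\<in>P. u p * wsum p W)" by (simp add: wsum_def sum_distrib_left)
    finally show ?thesis .
  qed
  then have "(\<Sum>p\<in>P. u p * (1 - wsum p W)) = 0"
    using ws u1 by (simp add: right_diff_distrib sum_subtractf)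
  then have z: "\<forall>p\<in>P. u p * (1 - wsum p W) = 0"
  proof -
    have "\<And>p. p \<in> P \<Longrightarrow> 0 \<le> u p * (1 - wsum p W)"
      using u0 wle by (simp add: mult_nonneg_nonneg)
    then show ?thesis using sum_nonneg_eq_0_iff[OF fP, of "\<lambda>p. u p * (1 - wsum p W)"] \<open>(\<Sum>p\<in>P. u p * (1 - wsum p W)) = 0\<close> by simp
  qed
  define A where "A = {p\<in>P. u p \<noteq> 0}"
  have AP: "A \<subseteq> P" unfolding A_def by auto
  have fA: "finite A" using fP AP finite_subset by blast
  have z0: "\<forall>i\<in>P-A. u i = 0" unfolding A_def by auto
  then have z1: "\<forall>i\<in>P-A. u i *\<^sub>R i = 0" by simp
  have sA: "sum u A = 1" using u1 sum.mono_neutral_left[OF fP AP z0] by simp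
  have xA: "(\<Sum>p\<in>A. u p *\<^sub>R p) = x"
    using ux sum.mono_neutral_left[OF fP AP z1] by simp
  have inA: "p \<in> char_vec ` {S. is_stable (clique_proj H W) S}" if "p \<in> A" for p
  proof -
    from that have pP: "p \<in> P" and "u p \<noteq> 0" unfolding A_def by auto
    then have "wsum p W = 1" using z by auto
    from pP obtain S where S: "is_stable H S" "p = char_vec S" unfolding P_def by auto
    then have "card (W \<inter> S) = 1" using \<open>wsum p W = 1\<close> by (simp add: wsum_char_vec)
    then obtain w where "W \<inter> S = {w}" using card_1_singletonE by blast
    then show ?thesis using stable_proj[OF S(1) _ ns] S(2) by blast
  qed
  show ?thesis unfolding STAB_def
  proof -
    have "(\<Sum>p\<in>A. u p *\<^sub>R p) \<in> convex hull (char_vec ` {S. is_stable (clique_proj H W) S})"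
      by (rule convex_sum[OF fA convex_convex_hull sA]) (use u0 AP inA in \<open>auto intro: hull_inc\<close>)
    then show "x \<in> convex hull (char_vec ` {S. is_stable (clique_proj H W) S})" using xA by simp
  qed
qed

lemma no_singleton:
  assumes "simple_graph E"
  shows "\<forall>u. {u} \<notin> proj_seq E W t"
proof (induction t)
  case 0
  then show ?case using assms unfolding simple_graph_def by (auto dest!: bspec)
next
  case (Suc t)
  then show ?case unfolding proj_seq.simps
  proof (intro allI notI)
    fix u assume "{u} \<in> clique_proj (proj_seq E W t) (W (Suc t))"
    moreover have "{u} \<notin> proj_seq E W t" using Suc by blast
    ultimately obtain a b where "{u} = {a,b}" "a \<noteq> b" unfolding clique_proj_def by blast
    then show False by (metis insert_iff singletonD)
  qed
qed

theorem lemma5: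
  fixes E :: "'n::finite set set" and W :: "nat \<Rightarrow> 'n set" and r :: nat
  assumes "simple_graph E"
    and "inj_on W {1..r}"
    and "\<And>t. t \<in> {1..r} \<Longrightarrow> is_clique (proj_seq E W (t - 1)) (W t) \<and> card (W t) \<ge> 2"
  shows "\<forall>t\<in>{0..r}. {x \<in> STAB E. \<forall>j\<in>{1..t}. wsum x (W j) = 1} \<subseteq> STAB (proj_seq E W t)"
proof -
  have "t \<le> r \<longrightarrow> {x \<in> STAB E. \<forall>j\<in>{1..t}. wsum x (W j) = 1} \<subseteq> STAB (proj_seq E W t)" for t
  proof (induction t)
    case 0
    then show ?case by auto
  next
    case (Suc t)
    show ?case
    proof (intro impI subsetI)
      fix x assume le: "Suc t \<le> r" and x: "x \<in> {x \<in> STAB E. \<forall>j\<in>{1..Suc t}. wsum x (W j) = 1}"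
      then have "x \<in> STAB (proj_seq E W t)" using Suc by auto
      moreover have "is_clique (proj_seq E W t) (W (Suc t))" using assms(3)[of "Suc t"] le by auto
      moreover have "wsum x (W (Suc t)) = 1" using x by auto
      ultimately show "x \<in> STAB (proj_seq E W (Suc t))"
        using key[of x "proj_seq E W t" "W (Suc t)"] no_singleton[OF assms(1), of W t] by simp
    qed
  qed
  then show ?thesis by auto
qed

end
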